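(* $\mathrm{ChrMem}(\mathrm{RL}) > 1$.
   Context: Let $\Omega=\mathbb{N}\times\{0,1\}$ with partial order $(n,a)\preceq(m,b)$ iff $(n,a)=(m,b)$ or $n<m$. Let $\mathbb{M}$ be the set of all functions $f\colon\Omega\to\Omega$ monotone w.r.t. $\preceq$. The Rope Ladder condition $\mathrm{RL}\subseteq\mathbb{M}^\omega$ (a winning condition over the color set $\mathbb{M}$) consists of all sequences $(f_1,f_2,\ldots)\in\mathbb{M}^\omega$ for which there is $(N,b)\in\Omega$ with $f_n\circ\cdots\circ f_1((0,0))\preceq(N,b)$ for all $n\ge1$. Arenas, strategies and memory: an arena over a color set $C$ is a tuple $\langle V_P, V_A, E\rangle$ of finite sets with $V_P\cap V_A=\varnothing$, $V=V_P\cup V_A\neq\varnothing$, $E\subseteq V\times C\times V$, every node having an outgoing edge. Paths are non-empty finite/infinite sequences of consecutive edges, plus $0$-length paths $\lambda_v$ at each node. A Protagonist's strategy maps each finite path ending in $V_P$ to an outgoing edge of its last node; consistency of paths with a strategy is defined in the usual way. $S$ is winning from $u$ w.r.t. $W\subseteq C^\omega$ if every infinite path consistent with $S$ from $u$ has color sequence in $W$; $S$ is optimal w.r.t. $W$ if there is no node from which some strategy wins w.r.t. $W$ but $S$ does not. A memory structure is $\langle M,m_{init},\delta\rangle$ with $M$ finite and $\delta\colon M\times E\to M$ (extended to finite edge sequences); it is chromatic if $\delta(m,e)$ depends only on $m$ and the color of $e$. A strategy is built on top of it if its choice after a finite path depends only on the last node and the memory state reached from $m_{init}$ on that path. $\mathrm{ChrMem}(W)$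 is the least $k\in\mathbb{Z}^+$ such that every arena over $C$ admits a Protagonist's strategy built on top of a chromatic memory structure with $k$ states that is optimal w.r.t. $W$ ($+\infty$ if none exists). *)

theory Defs
  imports Main "HOL-Library.Extended_Nat"
begin

text \<open>Nodes and memory states are natural numbers (every finite arena / memory
structure is isomorphic to one of this form). An edge is a triple
(source, colour, target).\<close>

type_synonym 'c edge = "nat \<times> 'c \<times> nat"

definition src :: "'c edge \<Rightarrow> nat" where "src e = fst e"
definition col :: "'c edge \<Rightarrow> 'c" where "col e = fst (snd e)"
definition tgt :: "'c edge \<Rightarrow> nat" where "tgt e = snd (snd e)"

definition arena :: "'c set \<Rightarrow> nat set \<Rightarrow> nat set \<Rightarrow> 'c edge set \<Rightarrow> bool" where
  "arena C VP VA E \<longleftrightarrow> finite VP \<and> finite VA \<and> finite E \<and> VP \<inter> VA = {} \<and>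
     VP \<union> VA \<noteq> {} \<and> E \<subseteq> (VP \<union> VA) \<times> C \<times> (VP \<union> VA) \<and>
     (\<forall>v \<in> VP \<union> VA. \<exists>e \<in> E. src e = v)"

text \<open>A finite path is given by its start node u and its list of edges
(the empty list is the 0-length path at u).\<close>
definition fpath :: "nat set \<Rightarrow> 'c edge set \<Rightarrow> nat \<Rightarrow> 'c edge list \<Rightarrow> bool" where
  "fpath V E u es \<longleftrightarrow> u \<in> V \<and> set es \<subseteq> E \<and> (es \<noteq> [] \<longrightarrow> src (hd es) = u) \<and>
     (\<forall>i. Suc i < length es \<longrightarrow> tgt (es ! i) = src (es ! Suc i))"

definition lastnode :: "nat \<Rightarrow> 'c edge list \<Rightarrow> nat" where
  "lastnode u es = (if es = [] then u else tgt (last es))"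

definition ipath :: "'c edge set \<Rightarrow> nat \<Rightarrow> (nat \<Rightarrow> 'c edge) \<Rightarrow> bool" where
  "ipath E u \<rho> \<longleftrightarrow> (\<forall>n. \<rho> n \<in> E) \<and> src (\<rho> 0) = u \<and> (\<forall>n. tgt (\<rho> n) = src (\<rho> (Suc n)))"

definition prefix :: "(nat \<Rightarrow> 'c edge) \<Rightarrow> nat \<Rightarrow> 'c edge list" where
  "prefix \<rho> n = map \<rho> [0..<n]"

definition strategy :: "nat set \<Rightarrow> nat set \<Rightarrow> 'c edge set \<Rightarrow> (nat \<Rightarrow> 'c edge list \<Rightarrow> 'c edge) \<Rightarrow> bool" where
  "strategy VP VA E S \<longleftrightarrow> (\<forall>u es. fpath (VP \<union> VA) E u es \<and> lastnode u es \<in> VP \<longrightarrow>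
       S u es \<in> E \<and> src (S u es) = lastnode u es)"

definition consistent :: "nat set \<Rightarrow> (nat \<Rightarrow> 'c edge list \<Rightarrow> 'c edge) \<Rightarrow> nat \<Rightarrow> (nat \<Rightarrow> 'c edge) \<Rightarrow> bool" where
  "consistent VP S u \<rho> \<longleftrightarrow> (\<forall>n. lastnode u (prefix \<rho> n) \<in> VP \<longrightarrow> \<rho> n = S u (prefix \<rho> n))"

definition winning_from :: "nat set \<Rightarrow> 'c edge set \<Rightarrow> (nat \<Rightarrow> 'c edge list \<Rightarrow> 'c edge) \<Rightarrow> nat \<Rightarrow> (nat \<Rightarrow> 'c) set \<Rightarrow> bool" where
  "winning_from VP E S u W \<longleftrightarrow> (\<forall>\<rho>. ipath E u \<rho> \<and> consistent VP S u \<rho> \<longrightarrow> (\<lambda>n. col (\<rho> n)) \<in> W)"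

definition optimal :: "nat set \<Rightarrow> nat set \<Rightarrow> 'c edge set \<Rightarrow> (nat \<Rightarrow> 'c edge list \<Rightarrow> 'c edge) \<Rightarrow> (nat \<Rightarrow> 'c) set \<Rightarrow> bool" where
  "optimal VP VA E S W \<longleftrightarrow> \<not> (\<exists>u \<in> VP \<union> VA. (\<exists>S'. strategy VP VA E S' \<and> winning_from VP E S' u W)
       \<and> \<not> winning_from VP E S u W)"

definition mem_struct :: "'c edge set \<Rightarrow> nat set \<Rightarrow> nat \<Rightarrow> (nat \<Rightarrow> 'c edge \<Rightarrow> nat) \<Rightarrow> bool" where
  "mem_struct E M m0 \<delta> \<longleftrightarrow> finite M \<and> m0 \<in> M \<and> (\<forall>m \<in> M. \<forall>e \<in> E. \<delta> m e \<in> M)"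

definition chromatic :: "'c edge set \<Rightarrow> nat set \<Rightarrow> (nat \<Rightarrow> 'c edge \<Rightarrow> nat) \<Rightarrow> bool" where
  "chromatic E M \<delta> \<longleftrightarrow> (\<forall>m \<in> M. \<forall>e \<in> E. \<forall>e' \<in> E. col e = col e' \<longrightarrow> \<delta> m e = \<delta> m e')"

definition delta_star :: "(nat \<Rightarrow> 'c edge \<Rightarrow> nat) \<Rightarrow> nat \<Rightarrow> 'c edge list \<Rightarrow> nat" where
  "delta_star \<delta> m es = foldl \<delta> m es"

definition built_on :: "nat set \<Rightarrow> nat set \<Rightarrow> 'c edge set \<Rightarrow> nat \<Rightarrow> (nat \<Rightarrow> 'c edge \<Rightarrow> nat)
    \<Rightarrow> (nat \<Rightarrow> 'c edge list \<Rightarrow> 'c edge) \<Rightarrow> bool" where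
  "built_on VP VA E m0 \<delta> S \<longleftrightarrow> (\<forall>u es u' es'.
      fpath (VP \<union> VA) E u es \<and> lastnode u es \<in> VP \<and> fpath (VP \<union> VA) E u' es' \<and>
      lastnode u es = lastnode u' es' \<and> delta_star \<delta> m0 es = delta_star \<delta> m0 es'
      \<longrightarrow> S u es = S u' es')"

definition chr_mem_suffices :: "'c set \<Rightarrow> (nat \<Rightarrow> 'c) set \<Rightarrow> nat \<Rightarrow> bool" where
  "chr_mem_suffices C W k \<longleftrightarrow> (\<forall>VP VA E. arena C VP VA E \<longrightarrow>
     (\<exists>M m0 \<delta> S. mem_struct E M m0 \<delta> \<and> chromatic E M \<delta> \<and> card M = k \<and>
        strategy VP VA E S \<and> built_on VP VA E m0 \<delta> S \<and> optimal VP VA E S W))"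

definition ChrMem :: "'c set \<Rightarrow> (nat \<Rightarrow> 'c) set \<Rightarrow> enat" where
  "ChrMem C W = (if \<exists>k. k \<ge> 1 \<and> chr_mem_suffices C W k
                 then enat (LEAST k. k \<ge> 1 \<and> chr_mem_suffices C W k) else \<infinity>)"

text \<open>Omega = N x {0,1}, with {0,1} represented by bool (False = 0, True = 1).\<close>
type_synonym omega = "nat \<times> bool"

definition prec :: "omega \<Rightarrow> omega \<Rightarrow> bool" where
  "prec x y \<longleftrightarrow> x = y \<or> fst x < fst y"

definition MM :: "(omega \<Rightarrow> omega) set" where
  "MM = {f. monotone prec prec f}"

text \<open>comp_seq c n = c (n-1) o ... o c 0 (colour sequences are indexed from 0, so c 0 = f_1).\<close>
primrec comp_seq :: "(nat \<Rightarrow> omega \<Rightarrow> omega) \<Rightarrow> nat \<Rightarrow> omega \<Rightarrow> omega" where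
  "comp_seq c 0 = id"
| "comp_seq c (Suc n) = c n \<circ> comp_seq c n"

definition RL :: "(nat \<Rightarrow> omega \<Rightarrow> omega) set" where
  "RL = {c. (\<forall>i. c i \<in> MM) \<and> (\<exists>N b. \<forall>n \<ge> 1. prec (comp_seq c n (0, False)) (N, b))}"

end

theory Submission
  imports Defs
begin

definition ff :: "omega \<Rightarrow> omega" where
  "ff x = (if snd x then (Suc (fst x), True) else (fst x, True))"
definition gg :: "omega \<Rightarrow> omega" where
  "gg x = (if snd x then (fst x, False) else (Suc (fst x), False))"

lemma ff_MM: "ff \<in> MM"
  unfolding MM_def monotone_def prec_def ff_def by auto

lemma gg_MM: "gg \<in> MM"
  unfolding MM_def monotone_def prec_def gg_def by auto

lemma ff_ne_gg: "ff \<noteq> gg"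
proof
  assume "ff = gg"
  hence "ff (0,False) = gg (0,False)" by simp
  thus False by (simp add: ff_def gg_def)
qed

definition EE :: "(omega \<Rightarrow> omega) edge set" where
  "EE = {(0, ff, 0), (0, gg, 0)}"

lemma arena_EE: "arena MM {0} {} EE"
  unfolding arena_def EE_def using ff_MM gg_MM by (auto simp: src_def)

lemma comp_ff: "comp_seq (\<lambda>_. ff) (Suc n) (0, False) = (n, True)"
  by (induction n) (auto simp: ff_def)

lemma comp_gg: "comp_seq (\<lambda>_. gg) n (0, False) = (n, False)"
  by (induction n) (auto simp: gg_def)

lemma ff_notRL: "(\<lambda>_. ff) \<notin> RL"
proof
  assume "(\<lambda>_. ff) \<in> RL"
  then obtain N b where h: "\<forall>n\<ge>1. prec (comp_seq (\<lambda>_. ff) n (0, False)) (N, b)"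
    unfolding RL_def by blast
  have "prec (comp_seq (\<lambda>_. ff) (Suc (Suc N)) (0, False)) (N, b)" by (rule h[rule_format]) simp
  thus False by (simp only: comp_ff) (simp add: prec_def)
qed

lemma gg_notRL: "(\<lambda>_. gg) \<notin> RL"
proof
  assume "(\<lambda>_. gg) \<in> RL"
  then obtain N b where h: "\<forall>n\<ge>1. prec (comp_seq (\<lambda>_. gg) n (0, False)) (N, b)"
    unfolding RL_def by blast
  have "prec (comp_seq (\<lambda>_. gg) (Suc N) (0, False)) (N, b)" by (rule h[rule_format]) simp
  thus False by (simp only: comp_gg) (simp add: prec_def)
qed

definition alt :: "nat \<Rightarrow> omega \<Rightarrow> omega" where
  "alt n = (if even n then ff else gg)"

lemma comp_alt: "comp_seq alt (2*k) (0, False) = (0, False) \<and> comp_seq alt (Suc (2*k)) (0, False) = (0, True)"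
  by (induction k) (auto simp: alt_def ff_def gg_def)

lemma alt_RL: "alt \<in> RL"
proof -
  have "\<forall>n. fst (comp_seq alt n (0, False)) = 0"
  proof
    fix n
    show "fst (comp_seq alt n (0, False)) = 0"
    proof (cases "even n")
      case True then obtain k where "n = 2*k" by (rule evenE)
      thus ?thesis using comp_alt[of k] by simp
    next
      case False then obtain k where "n = Suc (2*k)" by (metis oddE Suc_eq_plus1)
      thus ?thesis using comp_alt[of k] by (simp add: alt_def ff_def)
    qed
  qed
  hence "\<forall>n\<ge>1. prec (comp_seq alt n (0, False)) (1, False)" by (simp add: prec_def)
  moreover have "\<forall>i. alt i \<in> MM" by (simp add: alt_def ff_MM gg_MM)
  ultimately show ?thesis unfolding RL_def by blast
qed

lemma src_EE: "e \<in> EE \<Longrightarrow> src e = 0"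
  by (auto simp: EE_def src_def)

lemma tgt_EE: "e \<in> EE \<Longrightarrow> tgt e = 0"
  by (auto simp: EE_def tgt_def)

lemma lastnode_EE: "set es \<subseteq> EE \<Longrightarrow> lastnode 0 es = 0"
  unfolding lastnode_def using tgt_EE by (metis last_in_set subsetD)

lemma delta_in: "mem_struct E M m0 \<delta> \<Longrightarrow> m \<in> M \<Longrightarrow> set es \<subseteq> E \<Longrightarrow> foldl \<delta> m es \<in> M"
  by (induction es arbitrary: m) (auto simp: mem_struct_def)

lemma not_suff1: "\<not> chr_mem_suffices MM RL 1"
proof
  assume "chr_mem_suffices MM RL 1"
  then obtain M m0 \<delta> S where ms: "mem_struct EE M m0 \<delta>" and c1: "card M = 1"
    and st: "strategy {0} {} EE S" and bo: "built_on {0} {} EE m0 \<delta> S"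
    and op: "optimal {0} {} EE S RL"
    using arena_EE unfolding chr_mem_suffices_def by blast
  have Mm: "M = {m0}" using ms c1 unfolding mem_struct_def by (metis card_1_singletonE singletonD)
  define S' :: "nat \<Rightarrow> (omega \<Rightarrow> omega) edge list \<Rightarrow> (omega \<Rightarrow> omega) edge" where
    "S' = (\<lambda>u es. if even (length es) then (0, ff, 0) else (0, gg, 0))"
  have fp_set: "fpath ({0} \<union> {}) EE u es \<Longrightarrow> set es \<subseteq> EE \<and> u = 0" for u es
    by (simp add: fpath_def)
  have st': "strategy {0} {} EE S'"
    unfolding strategy_def S'_def
    by (auto simp: EE_def src_def lastnode_def fpath_def)
  have win': "winning_from {0} EE S' 0 RL"
    unfolding winning_from_def
  proof (intro allI impI)
    fix \<rho> assume h: "ipath EE 0 \<rho> \<and> consistent {0} S' 0 \<rho>"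
    have "\<rho> n = S' 0 (prefix \<rho> n)" for n
    proof -
      have "set (prefix \<rho> n) \<subseteq> EE" using h by (auto simp: prefix_def ipath_def)
      hence "lastnode 0 (prefix \<rho> n) \<in> {0}" using lastnode_EE by simp
      thus ?thesis using h by (simp add: consistent_def)
    qed
    moreover have "S' 0 (prefix \<rho> n) = (if even n then (0, ff, 0) else (0, gg, 0))" for n
      by (simp add: S'_def prefix_def)
    ultimately have "\<rho> n = (if even n then (0, ff, 0) else (0, gg, 0))" for n
      by metis
    hence "(\<lambda>n. col (\<rho> n)) = alt"
      by (auto simp: col_def alt_def)
    thus "(\<lambda>n. col (\<rho> n)) \<in> RL" using alt_RL by simp
  qed
  hence winS: "winning_from {0} EE S 0 RL" using op st' unfolding optimal_def by blast
  define e0 where "e0 = S 0 []"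
  have e0E: "e0 \<in> EE" using st unfolding strategy_def e0_def
    by (auto simp: fpath_def lastnode_def)
  have Sc: "S 0 es = e0" if "set es \<subseteq> EE" for es
  proof -
    have "delta_star \<delta> m0 es \<in> M" using delta_in[OF ms _ that] Mm by (simp add: delta_star_def)
    hence d: "delta_star \<delta> m0 es = delta_star \<delta> m0 []" using Mm by (simp add: delta_star_def)
    have fp: "fpath ({0} \<union> {}) EE 0 es"
      unfolding fpath_def
    proof (intro conjI allI impI)
      show "set es \<subseteq> EE" by fact
      show "src (hd es) = 0" if "es \<noteq> []"
        using \<open>set es \<subseteq> EE\<close> that src_EE by (metis hd_in_set subsetD)
      show "tgt (es ! i) = src (es ! Suc i)" if "Suc i < length es" for i
        using \<open>set es \<subseteq> EE\<close> that src_EE tgt_EE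
        by (metis Suc_lessD nth_mem subsetD)
    qed simp
    have fp0: "fpath ({0} \<union> {}) EE 0 []" by (simp add: fpath_def)
    show ?thesis using bo fp fp0 d lastnode_EE[OF that] unfolding built_on_def e0_def
      by (auto simp: lastnode_def)
  qed
  have "ipath EE 0 (\<lambda>_. e0)" using e0E src_EE tgt_EE by (simp add: ipath_def)
  moreover have "consistent {0} S 0 (\<lambda>_. e0)"
    unfolding consistent_def
  proof (intro allI impI)
    fix n
    have "set (prefix (\<lambda>_. e0) n) \<subseteq> EE" using e0E by (auto simp: prefix_def)
    thus "e0 = S 0 (prefix (\<lambda>_. e0) n)" using Sc by metis
  qed
  ultimately have "(\<lambda>n. col e0) \<in> RL" using winS unfolding winning_from_def by blast
  moreover have "col e0 = ff \<or> col e0 = gg" using e0E by (auto simp: EE_def col_def)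
  ultimately show False using ff_notRL gg_notRL by auto
qed

theorem fact1:
  shows "ChrMem MM RL > 1"
proof (cases "\<exists>k. k \<ge> 1 \<and> chr_mem_suffices MM RL k")
  case True
  hence "(LEAST k. k \<ge> 1 \<and> chr_mem_suffices MM RL k) \<ge> 1 \<and> chr_mem_suffices MM RL (LEAST k. k \<ge> 1 \<and> chr_mem_suffices MM RL k)"
    by (rule LeastI_ex)
  hence "(LEAST k. k \<ge> 1 \<and> chr_mem_suffices MM RL k) > 1" using not_suff1
    by (metis le_neq_implies_less)
  thus ?thesis using True by (simp add: ChrMem_def one_enat_def)
next
  case False
  show ?thesis unfolding ChrMem_def if_not_P[OF False] by simp
qed

end
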